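(* Let $u_x$ be the value at a point $x$ of a curvature-type tensor on a Hermitian manifold $(M,g,J)$ with $u_x\ge0$, and suppose $u_x(\xi,\bar\xi,\eta,\bar\eta)=0$ for some $\xi,\eta\in T^{1,0}_xM$. Let $e_1,\dots,e_n$ be an orthonormal basis of $T^{1,0}_xM$. Then $$\sum_{i,j}\Big(u_x(\xi,\bar\xi,e_i,\bar e_j)u_x(e_j,\bar e_i,\eta,\bar\eta)-u_x(\xi,\bar e_i,\eta,\bar e_j)u_x(e_j,\bar\xi,e_i,\bar\eta)\Big)\ge0.$$
   Context: A Hermitian metric $g$ on a complex manifold $(M,J)$ is a $J$-invariant Riemannian metric extended complex-bilinearly to $T_{\mathbb C}M=T^{1,0}M\oplus T^{0,1}M$; orthonormality of $e_i$ is with respect to the Hermitian inner product $g(\cdot,\bar\cdot)$ on $T^{1,0}_xM$. A real tensor $u\in(T^*M)^{\otimes4}$ is of curvature type if $u(X,Y,Z,W)=-u(Y,X,Z,W)=-u(X,Y,W,Z)$ and $u(JX,JY,Z,W)=u(X,Y,JZ,JW)=u(X,Y,Z,W)$; it is extended complex-multilinearly. $u_x\ge0$ means $u_x(\xi,\bar\xi,\eta,\bar\eta)\ge0$ for all $\xi,\eta\in T^{1,0}_xM$. *)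

theory Defs
  imports "HOL-Analysis.Analysis" "HOL-Library.Complex_Order"
begin

text \<open>A point x of the manifold is fixed; the real tangent space T_xM is modelled by a
finite-dimensional real vector space 'v.  Complexified vectors X + iY are pairs (X, Y).\<close>

type_synonym 'v cvec = "'v \<times> 'v"

definition cscale :: "complex \<Rightarrow> 'v::real_vector cvec \<Rightarrow> 'v cvec" where
  "cscale c A = (Re c *\<^sub>R fst A - Im c *\<^sub>R snd A, Re c *\<^sub>R snd A + Im c *\<^sub>R fst A)"

definition cconj :: "'v::real_vector cvec \<Rightarrow> 'v cvec" where
  "cconj A = (fst A, - snd A)"

definition cext :: "('v \<Rightarrow> complex) \<Rightarrow> 'v cvec \<Rightarrow> complex" where
  "cext f A = f (fst A) + \<i> * f (snd A)"

definition cext2 :: "('v \<Rightarrow> 'v \<Rightarrow> real) \<Rightarrow> 'v cvec \<Rightarrow> 'v cvec \<Rightarrow> complex" where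
  "cext2 g A B = cext (\<lambda>a. cext (\<lambda>b. complex_of_real (g a b)) B) A"

definition cext4 :: "('v \<Rightarrow> 'v \<Rightarrow> 'v \<Rightarrow> 'v \<Rightarrow> real) \<Rightarrow> 'v cvec \<Rightarrow> 'v cvec \<Rightarrow> 'v cvec \<Rightarrow> 'v cvec \<Rightarrow> complex" where
  "cext4 u A B C D =
     cext (\<lambda>a. cext (\<lambda>b. cext (\<lambda>c. cext (\<lambda>d. complex_of_real (u a b c d)) D) C) B) A"

definition cJ :: "('v \<Rightarrow> 'v) \<Rightarrow> 'v cvec \<Rightarrow> 'v cvec" where
  "cJ J A = (J (fst A), J (snd A))"

definition T10 :: "('v::real_vector \<Rightarrow> 'v) \<Rightarrow> 'v cvec set" where
  "T10 J = {A. cJ J A = cscale \<i> A}"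

definition complex_structure :: "('v::real_vector \<Rightarrow> 'v) \<Rightarrow> bool" where
  "complex_structure J \<longleftrightarrow> linear J \<and> (\<forall>X. J (J X) = - X)"

definition hermitian_metric :: "('v::real_vector \<Rightarrow> 'v) \<Rightarrow> ('v \<Rightarrow> 'v \<Rightarrow> real) \<Rightarrow> bool" where
  "hermitian_metric J g \<longleftrightarrow>
     (\<forall>Y. linear (\<lambda>X. g X Y)) \<and> (\<forall>X Y. g X Y = g Y X) \<and> (\<forall>X. X \<noteq> 0 \<longrightarrow> g X X > 0)
     \<and> (\<forall>X Y. g (J X) (J Y) = g X Y)"

definition curvature_type :: "('v::real_vector \<Rightarrow> 'v) \<Rightarrow> ('v \<Rightarrow> 'v \<Rightarrow> 'v \<Rightarrow> 'v \<Rightarrow> real) \<Rightarrow> bool" where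
  "curvature_type J u \<longleftrightarrow>
     (\<forall>Y Z W. linear (\<lambda>X. u X Y Z W)) \<and> (\<forall>X Z W. linear (\<lambda>Y. u X Y Z W)) \<and>
     (\<forall>X Y W. linear (\<lambda>Z. u X Y Z W)) \<and> (\<forall>X Y Z. linear (\<lambda>W. u X Y Z W)) \<and>
     (\<forall>X Y Z W. u X Y Z W = - u Y X Z W) \<and> (\<forall>X Y Z W. u X Y Z W = - u X Y W Z) \<and>
     (\<forall>X Y Z W. u (J X) (J Y) Z W = u X Y Z W) \<and> (\<forall>X Y Z W. u X Y (J Z) (J W) = u X Y Z W)"

definition nonneg_tensor :: "('v::real_vector \<Rightarrow> 'v) \<Rightarrow> ('v \<Rightarrow> 'v \<Rightarrow> 'v \<Rightarrow> 'v \<Rightarrow> real) \<Rightarrow> bool" where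
  "nonneg_tensor J u \<longleftrightarrow>
     (\<forall>\<xi>\<in>T10 J. \<forall>\<eta>\<in>T10 J. cext4 u \<xi> (cconj \<xi>) \<eta> (cconj \<eta>) \<ge> 0)"

definition orthonormal_basis_T10 ::
  "('v::real_vector \<Rightarrow> 'v) \<Rightarrow> ('v \<Rightarrow> 'v \<Rightarrow> real) \<Rightarrow> nat \<Rightarrow> (nat \<Rightarrow> 'v cvec) \<Rightarrow> bool" where
  "orthonormal_basis_T10 J g n e \<longleftrightarrow>
     (\<forall>i<n. e i \<in> T10 J) \<and>
     (\<forall>i<n. \<forall>j<n. cext2 g (e i) (cconj (e j)) = (if i = j then 1 else 0)) \<and>
     (\<forall>\<xi>\<in>T10 J. \<exists>c. \<xi> = (\<Sum>i<n. cscale (c i) (e i)))"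

end

theory Submission
  imports Defs
begin


lemma lin_rules:
  assumes "linear f"
  shows "f (x + y) = f x + f y" "f (r *\<^sub>R x) = r *\<^sub>R f x" "f (x - y) = f x - f y" "f (- x) = - f x" "f 0 = 0"
  using assms by (auto simp: linear_add linear_scale linear_diff linear_neg linear_0)

lemma cext4_add1:
  assumes "\<And>Y Z W. linear (\<lambda>X. u X Y Z W)"
  shows "cext4 u (A + A') B C D = cext4 u A B C D + cext4 u A' B C D"
proof -
  have h: "\<And>x y b c d. u (x + y) b c d = u x b c d + u y b c d"
    using lin_rules(1)[OF assms] by simp
  show ?thesis by (simp add: cext4_def cext_def h algebra_simps)
qed

lemma cext4_scale1:
  assumes "\<And>Y Z W. linear (\<lambda>X. u X Y Z W)"
  shows "cext4 u (cscale c A) B C D = c * cext4 u A B C D"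
proof -
  have h: "\<And>x y b c d. u (x - y) b c d = u x b c d - u y b c d"
          "\<And>x y b c d. u (x + y) b c d = u x b c d + u y b c d"
          "\<And>x r b c d. u (r *\<^sub>R x) b c d = r * u x b c d"
    using lin_rules[OF assms] by simp_all
  show ?thesis
    apply (subst (2) complex_eq)
    apply (simp add: cext4_def cext_def cscale_def h)
    apply (simp add: complex_eq_iff algebra_simps)
    done
qed

lemma cext4_swap12: "cext4 u A B C D = cext4 (\<lambda>b a c d. u a b c d) B A C D"
  by (simp add: cext4_def cext_def algebra_simps)
lemma cext4_swap13: "cext4 u A B C D = cext4 (\<lambda>c b a d. u a b c d) C B A D"
  by (simp add: cext4_def cext_def algebra_simps)
lemma cext4_swap14: "cext4 u A B C D = cext4 (\<lambda>d b c a. u a b c d) D B C A"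
  by (simp add: cext4_def cext_def algebra_simps)

lemma cext4_uminus: "cext4 (\<lambda>a b c d. - u a b c d) A B C D = - cext4 u A B C D"
  by (simp add: cext4_def cext_def algebra_simps)

lemma cscale_zero: "cscale 0 A = 0" by (simp add: cscale_def zero_prod_def)

context
  fixes J :: "'v::real_vector \<Rightarrow> 'v" and u
  assumes ct: "curvature_type J u"
begin

lemma l1: "linear (\<lambda>X. u X Y Z W)" using ct[unfolded curvature_type_def, THEN conjunct1, rule_format] .
lemma l2: "linear (\<lambda>X. u Y X Z W)" using ct[unfolded curvature_type_def, THEN conjunct2, THEN conjunct1, rule_format] .
lemma l3: "linear (\<lambda>X. u Y Z X W)" using ct[unfolded curvature_type_def, THEN conjunct2, THEN conjunct2, THEN conjunct1, rule_format] .
lemma l4: "linear (\<lambda>X. u Y Z W X)" using ct[unfolded curvature_type_def, THEN conjunct2, THEN conjunct2, THEN conjunct2, THEN conjunct1, rule_format] .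

lemma c_add1: "cext4 u (A + A') B C D = cext4 u A B C D + cext4 u A' B C D"
  by (rule cext4_add1[OF l1])
lemma c_add2: "cext4 u A (B + B') C D = cext4 u A B C D + cext4 u A B' C D"
proof -
  have "cext4 u A (B + B') C D = cext4 (\<lambda>b a c d. u a b c d) (B+B') A C D" by (rule cext4_swap12)
  also have "\<dots> = cext4 (\<lambda>b a c d. u a b c d) B A C D + cext4 (\<lambda>b a c d. u a b c d) B' A C D"
    by (rule cext4_add1) (rule l2)
  also have "\<dots> = cext4 u A B C D + cext4 u A B' C D"
    by (simp only: cext4_swap12[of u A B C D, symmetric] cext4_swap12[of u A B' C D, symmetric])
  finally show ?thesis .
qed
lemma c_add3: "cext4 u A B (C + C') D = cext4 u A B C D + cext4 u A B C' D"
proof -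
  have "cext4 u A B (C + C') D = cext4 (\<lambda>c b a d. u a b c d) (C+C') B A D" by (rule cext4_swap13)
  also have "\<dots> = cext4 (\<lambda>c b a d. u a b c d) C B A D + cext4 (\<lambda>c b a d. u a b c d) C' B A D"
    by (rule cext4_add1) (rule l3)
  also have "\<dots> = cext4 u A B C D + cext4 u A B C' D"
    by (simp only: cext4_swap13[of u A B C D, symmetric] cext4_swap13[of u A B C' D, symmetric])
  finally show ?thesis .
qed
lemma c_add4: "cext4 u A B C (D + D') = cext4 u A B C D + cext4 u A B C D'"
proof -
  have "cext4 u A B C (D + D') = cext4 (\<lambda>d b c a. u a b c d) (D+D') B C A" by (rule cext4_swap14)
  also have "\<dots> = cext4 (\<lambda>d b c a. u a b c d) D B C A + cext4 (\<lambda>d b c a. u a b c d) D' B C A"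
    by (rule cext4_add1) (rule l4)
  also have "\<dots> = cext4 u A B C D + cext4 u A B C D'"
    by (simp only: cext4_swap14[of u A B C D, symmetric] cext4_swap14[of u A B C D', symmetric])
  finally show ?thesis .
qed
lemmas c_add = c_add1 c_add2 c_add3 c_add4

lemma c_scale1: "cext4 u (cscale c A) B C D = c * cext4 u A B C D"
  by (rule cext4_scale1[OF l1])
lemma c_scale2: "cext4 u A (cscale c B) C D = c * cext4 u A B C D"
proof -
  have "cext4 u A (cscale c B) C D = cext4 (\<lambda>b a c d. u a b c d) (cscale c B) A C D" by (rule cext4_swap12)
  also have "\<dots> = c * cext4 (\<lambda>b a c d. u a b c d) B A C D"
    by (rule cext4_scale1) (rule l2)
  also have "\<dots> = c * cext4 u A B C D"
    by (simp only: cext4_swap12[of u A B C D, symmetric])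
  finally show ?thesis .
qed
lemma c_scale3: "cext4 u A B (cscale c C) D = c * cext4 u A B C D"
proof -
  have "cext4 u A B (cscale c C) D = cext4 (\<lambda>c b a d. u a b c d) (cscale c C) B A D" by (rule cext4_swap13)
  also have "\<dots> = c * cext4 (\<lambda>c b a d. u a b c d) C B A D"
    by (rule cext4_scale1) (rule l3)
  also have "\<dots> = c * cext4 u A B C D"
    by (simp only: cext4_swap13[of u A B C D, symmetric])
  finally show ?thesis .
qed
lemma c_scale4: "cext4 u A B C (cscale c D) = c * cext4 u A B C D"
proof -
  have "cext4 u A B C (cscale c D) = cext4 (\<lambda>d b c a. u a b c d) (cscale c D) B C A" by (rule cext4_swap14)
  also have "\<dots> = c * cext4 (\<lambda>d b c a. u a b c d) D B C A"
    by (rule cext4_scale1) (rule l4)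
  also have "\<dots> = c * cext4 u A B C D"
    by (simp only: cext4_swap14[of u A B C D, symmetric])
  finally show ?thesis .
qed
lemmas c_scale = c_scale1 c_scale2 c_scale3 c_scale4

lemma c_zero:
  "cext4 u 0 B C D = 0" "cext4 u A 0 C D = 0" "cext4 u A B 0 D = 0" "cext4 u A B C 0 = 0"
  using c_scale1[of 0 0] c_scale2[of _ 0 0] c_scale3[of _ _ 0 0] c_scale4[of _ _ _ 0 0]
  by (simp_all add: cscale_zero)

lemma c_sum:
  "cext4 u (\<Sum>i\<in>S. f i) B C D = (\<Sum>i\<in>S. cext4 u (f i) B C D)"
  "cext4 u A (\<Sum>i\<in>S. f i) C D = (\<Sum>i\<in>S. cext4 u A (f i) C D)"
  "cext4 u A B (\<Sum>i\<in>S. f i) D = (\<Sum>i\<in>S. cext4 u A B (f i) D)"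
  "cext4 u A B C (\<Sum>i\<in>S. f i) = (\<Sum>i\<in>S. cext4 u A B C (f i))"
  by (induction S rule: infinite_finite_induct, simp_all add: c_zero c_add)+

lemma anti12: "u X Y Z W = - u Y X Z W"
  using ct[unfolded curvature_type_def, THEN conjunct2, THEN conjunct2, THEN conjunct2, THEN conjunct2, THEN conjunct1, rule_format] .
lemma anti34: "u X Y Z W = - u X Y W Z"
  using ct[unfolded curvature_type_def, THEN conjunct2, THEN conjunct2, THEN conjunct2, THEN conjunct2, THEN conjunct2, THEN conjunct1, rule_format] .

lemma c_anti12: "cext4 u A B C D = - cext4 u B A C D"
proof -
  have e: "(\<lambda>b a c d. u a b c d) = (\<lambda>a b c d. - u a b c d)"
    by (intro ext) (rule anti12)
  have "cext4 u A B C D = cext4 (\<lambda>b a c d. u a b c d) B A C D" by (rule cext4_swap12)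
  also have "\<dots> = cext4 (\<lambda>a b c d. - u a b c d) B A C D" by (simp only: e)
  also have "\<dots> = - cext4 u B A C D" by (rule cext4_uminus)
  finally show ?thesis .
qed

lemma c_anti34: "cext4 u A B C D = - cext4 u A B D C"
proof -
  have e: "(\<lambda>a b d c. u a b c d) = (\<lambda>a b c d. - u a b c d)"
    by (intro ext) (rule anti34)
  have "cext4 u A B C D = cext4 (\<lambda>a b d c. u a b c d) A B D C" 
    by (simp add: cext4_def cext_def algebra_simps)
  also have "\<dots> = cext4 (\<lambda>a b c d. - u a b c d) A B D C" by (simp only: e)
  also have "\<dots> = - cext4 u A B D C" by (rule cext4_uminus)
  finally show ?thesis .
qed

lemma c_pairswap: "cext4 u A B C D = cext4 u B A D C"
  using c_anti12[of A B C D] c_anti34[of B A C D] by simp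

lemma c_cnj: "cnj (cext4 u A B C D) = cext4 u (cconj A) (cconj B) (cconj C) (cconj D)"
proof -
  have h: "\<And>a b c d. u (-a) b c d = - u a b c d" "\<And>a b c d. u a (-b) c d = - u a b c d"
    "\<And>a b c d. u a b (-c) d = - u a b c d" "\<And>a b c d. u a b c (-d) = - u a b c d"
    using lin_rules(4)[OF l1] lin_rules(4)[OF l2] lin_rules(4)[OF l3] lin_rules(4)[OF l4] by simp_all
  show ?thesis by (simp add: cext4_def cext_def cconj_def h complex_eq_iff)
qed

end


lemma cconj_add: "cconj (A + B) = cconj A + cconj B" by (simp add: cconj_def)
lemma cconj_scale: "cconj (cscale c A) = cscale (cnj c) (cconj A)"
  by (simp add: cconj_def cscale_def)
lemma cconj_zero: "cconj 0 = 0" by (simp add: cconj_def zero_prod_def)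
lemma cconj_sum: "cconj (\<Sum>i\<in>S. f i) = (\<Sum>i\<in>S. cconj (f i))"
  by (induction S rule: infinite_finite_induct) (simp_all add: cconj_add cconj_zero)

lemma T10_add:
  assumes "complex_structure J" "A \<in> T10 J" "B \<in> T10 J" shows "A + B \<in> T10 J"
proof -
  have l: "linear J" using assms(1) by (simp add: complex_structure_def)
  show ?thesis using assms(2,3)
    by (auto simp: T10_def cJ_def cscale_def linear_add[OF l] prod_eq_iff)
qed

lemma T10_scale:
  assumes "complex_structure J" "A \<in> T10 J" shows "cscale c A \<in> T10 J"
proof -
  have l: "linear J" using assms(1) by (simp add: complex_structure_def)
  show ?thesis using assms(2)
    by (auto simp: T10_def cJ_def cscale_def linear_add[OF l] linear_diff[OF l] linear_scale[OF l] prod_eq_iff)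
qed

lemma T10_zero: "complex_structure J \<Longrightarrow> 0 \<in> T10 J"
  by (auto simp: T10_def cJ_def cscale_def complex_structure_def linear_0 zero_prod_def)

lemma T10_sum:
  assumes "complex_structure J" "\<And>i. i \<in> S \<Longrightarrow> f i \<in> T10 J" shows "(\<Sum>i\<in>S. f i) \<in> T10 J"
  using assms(2)
  by (induction S rule: infinite_finite_induct) (simp_all add: T10_zero[OF assms(1)] T10_add[OF assms(1)])

lemma poly_lemma:
  fixes b d :: real
  assumes "\<And>t. 0 \<le> b * t^2 + d * t^4"
  shows "b \<ge> 0"
proof (rule ccontr)
  assume "\<not> b \<ge> 0"
  hence b: "b < 0" by simp
  define t where "t = sqrt (- b / (\<bar>d\<bar> + 1))"
  have nn: "- b / (\<bar>d\<bar> + 1) \<ge> 0" using b by (intro divide_nonneg_pos) auto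
  have t2: "t^2 = - b / (\<bar>d\<bar> + 1)" using nn unfolding t_def by (rule real_sqrt_pow2)
  have pos: "t^2 > 0" unfolding t2 using b by (intro divide_pos_pos) auto
  have "d * t^2 \<le> \<bar>d\<bar> * t^2" using pos by (intro mult_right_mono) auto
  also have "\<bar>d\<bar> * t^2 < - b"
    using b by (simp add: t2 field_simps)
  finally have "b + d * t^2 < 0" by simp
  hence "t^2 * (b + d * t^2) < 0" using pos by (simp add: mult_pos_neg)
  moreover have "t^2 * (b + d * t^2) = b * t^2 + d * t^4" by (simp add: algebra_simps power2_eq_square power4_eq_xxxx)
  ultimately show False using assms[of t] by simp
qed


lemma second_var:
  assumes ct: "curvature_type J u" and cs: "complex_structure J" and nn: "nonneg_tensor J u"
    and xi: "\<xi> \<in> T10 J" and eta: "\<eta> \<in> T10 J" and z: "cext4 u \<xi> (cconj \<xi>) \<eta> (cconj \<eta>) = 0"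
    and A: "A \<in> T10 J" and B: "B \<in> T10 J"
  shows "0 \<le> Re (cext4 u A (cconj A) \<eta> (cconj \<eta>) + cext4 u \<xi> (cconj \<xi>) B (cconj B)
     + cext4 u A (cconj \<xi>) B (cconj \<eta>) + cext4 u A (cconj \<xi>) \<eta> (cconj B)
     + cext4 u \<xi> (cconj A) B (cconj \<eta>) + cext4 u \<xi> (cconj A) \<eta> (cconj B))"
    (is "0 \<le> Re ?c2")
proof -
  define f where "f t = cext4 u (\<xi> + cscale (of_real t) A) (cconj (\<xi> + cscale (of_real t) A))
     (\<eta> + cscale (of_real t) B) (cconj (\<eta> + cscale (of_real t) B))" for t :: real
  have fpos: "0 \<le> Re (f t)" for t
  proof -
    have "\<xi> + cscale (of_real t) A \<in> T10 J" "\<eta> + cscale (of_real t) B \<in> T10 J"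
      using T10_add[OF cs] T10_scale[OF cs] xi eta A B by blast+
    hence "0 \<le> f t" using nn unfolding nonneg_tensor_def f_def by blast
    thus ?thesis by (simp add: less_eq_complex_def)
  qed
  define c4 where "c4 = cext4 u A (cconj A) B (cconj B)"
  have eq: "f t + f (-t) = 2 * (of_real t)^2 * ?c2 + 2 * (of_real t)^4 * c4" for t
    unfolding f_def c4_def
    apply (simp add: c_add[OF ct] c_scale[OF ct] cconj_add cconj_scale z)
    apply (simp add: algebra_simps power2_eq_square power4_eq_xxxx)
    done
  have "0 \<le> (2 * Re ?c2) * t^2 + (2 * Re c4) * t^4" for t
  proof -
    have "Re (f t + f (-t)) = (2 * Re ?c2) * t^2 + (2 * Re c4) * t^4"
      unfolding eq by (simp add: power2_eq_square power4_eq_xxxx)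
    thus ?thesis using fpos[of t] fpos[of "-t"] by simp
  qed
  from poly_lemma[OF this] show ?thesis by simp
qed


lemma G_nonneg:
  assumes ct: "curvature_type J u" and cs: "complex_structure J" and nn: "nonneg_tensor J u"
    and xi: "\<xi> \<in> T10 J" and eta: "\<eta> \<in> T10 J" and z: "cext4 u \<xi> (cconj \<xi>) \<eta> (cconj \<eta>) = 0"
    and A: "A \<in> T10 J" and B: "B \<in> T10 J"
  shows "0 \<le> Re (cext4 u A (cconj A) \<eta> (cconj \<eta>) + cext4 u \<xi> (cconj \<xi>) B (cconj B)
     + cext4 u A (cconj \<xi>) B (cconj \<eta>) + cext4 u \<xi> (cconj A) \<eta> (cconj B))"
proof -
  have A': "cscale (-\<i>) A \<in> T10 J" and B': "cscale \<i> B \<in> T10 J"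
    using T10_scale[OF cs] A B by auto
  note s1 = second_var[OF ct cs nn xi eta z A B]
  note s2 = second_var[OF ct cs nn xi eta z A' B']
  show ?thesis using s1 s2
    by (simp add: c_scale[OF ct] cconj_scale algebra_simps)
qed



definition qf :: "'i set \<Rightarrow> ('i \<Rightarrow> 'i \<Rightarrow> complex) \<Rightarrow> ('i \<Rightarrow> complex) \<Rightarrow> complex" where
  "qf I M z = (\<Sum>a\<in>I. \<Sum>c\<in>I. cnj (z a) * M a c * z c)"

lemma sum_two:
  assumes "finite I" "p \<in> I" "q \<in> I" "p \<noteq> q" "\<And>c. c \<in> I \<Longrightarrow> c \<noteq> p \<Longrightarrow> c \<noteq> q \<Longrightarrow> g c = 0"
  shows "(\<Sum>c\<in>I. g c) = g p + g q"
proof -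
  have "(\<Sum>c\<in>I. g c) = (\<Sum>c\<in>{p,q}. g c)"
    by (rule sum.mono_neutral_right) (use assms in auto)
  thus ?thesis using assms(4) by simp
qed

lemma sum_one:
  assumes "finite I" "p \<in> I" "\<And>c. c \<in> I \<Longrightarrow> c \<noteq> p \<Longrightarrow> g c = 0"
  shows "(\<Sum>c\<in>I. g c) = g p"
proof -
  have "(\<Sum>c\<in>I. g c) = (\<Sum>c\<in>{p}. g c)"
    by (rule sum.mono_neutral_right) (use assms in auto)
  thus ?thesis by simp
qed

lemma qf_two:
  assumes "finite I" "p \<in> I" "q \<in> I" "p \<noteq> q"
  shows "qf I M (\<lambda>a. if a = p then x else if a = q then y else 0) =
    cnj x * M p p * x + cnj x * M p q * y + cnj y * M q p * x + cnj y * M q q * y"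
  unfolding qf_def
  apply (subst sum_two[OF assms]; simp)
  apply (subst sum_two[OF assms]; simp)
  apply (subst sum_two[OF assms]; simp)
  using assms(4) by (simp add: algebra_simps)

lemma qf_one:
  assumes "finite I" "p \<in> I"
  shows "qf I M (\<lambda>a. if a = p then 1 else 0) = M p p"
  unfolding qf_def
  apply (subst sum_one[OF assms]; simp)
  apply (subst sum_one[OF assms]; simp)
  done


lemma sdr: "finite I \<Longrightarrow> (\<Sum>c\<in>I. f c * (if c = a0 then t else 0)) = (if a0 \<in> I then f a0 * (t::complex) else 0)"
  by (simp add: if_distrib[where f="\<lambda>x. f _ * x"] cong: if_cong)
lemma sdl: "finite I \<Longrightarrow> (\<Sum>c\<in>I. (if c = a0 then t else 0) * f c) = (if a0 \<in> I then t * f a0 else (0::complex))"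
  by (simp add: if_distrib[where f="\<lambda>x. x * f _"] cong: if_cong)

definition bf :: "'i set \<Rightarrow> ('i \<Rightarrow> 'i \<Rightarrow> complex) \<Rightarrow> ('i \<Rightarrow> complex) \<Rightarrow> ('i \<Rightarrow> complex) \<Rightarrow> complex" where
  "bf I M x y = (\<Sum>a\<in>I. \<Sum>c\<in>I. cnj (x a) * (M a c * y c))"

lemma qf_bf: "qf I M z = bf I M z z" by (simp add: qf_def bf_def mult.assoc)

lemma bf_diff1: "bf I M (\<lambda>a. x a - y a) w = bf I M x w - bf I M y w"
  by (simp add: bf_def left_diff_distrib sum_subtractf)
lemma bf_diff2: "bf I M w (\<lambda>a. x a - y a) = bf I M w x - bf I M w y"
  by (simp add: bf_def right_diff_distrib sum_subtractf)

lemma bf_delta1: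
  assumes "finite I" "a0 \<in> I"
  shows "bf I M (\<lambda>a. if a = a0 then t else 0) w = cnj t * (\<Sum>c\<in>I. M a0 c * w c)"
proof -
  have "bf I M (\<lambda>a. if a = a0 then t else 0) w = (\<Sum>a\<in>I. (if a = a0 then cnj t else 0) * (\<Sum>c\<in>I. M a c * w c))"
    unfolding bf_def by (simp add: sum_distrib_left if_distrib[where f=cnj] cong: if_cong)
  also have "\<dots> = cnj t * (\<Sum>c\<in>I. M a0 c * w c)" using assms by (simp add: sdl)
  finally show ?thesis .
qed

lemma bf_delta2:
  assumes "finite I" "a0 \<in> I"
  shows "bf I M w (\<lambda>a. if a = a0 then t else 0) = (\<Sum>a\<in>I. cnj (w a) * M a a0) * t"
proof -
  have "bf I M w (\<lambda>a. if a = a0 then t else 0) = (\<Sum>a\<in>I. cnj (w a) * (\<Sum>c\<in>I. M a c * (if c = a0 then t else 0)))"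
    unfolding bf_def by (simp add: sum_distrib_left)
  also have "\<dots> = (\<Sum>a\<in>I. cnj (w a) * M a a0 * t)" using assms by (simp add: sdr mult.assoc)
  also have "\<dots> = (\<Sum>a\<in>I. cnj (w a) * M a a0) * t" by (simp add: sum_distrib_right)
  finally show ?thesis .
qed

lemma qf_shift:
  assumes "finite I" "a0 \<in> I"
  shows "qf I M (\<lambda>c. z c - (if c = a0 then t else 0)) =
     qf I M z - (\<Sum>a\<in>I. cnj (z a) * M a a0) * t - cnj t * (\<Sum>c\<in>I. M a0 c * z c) + cnj t * (M a0 a0 * t)"
proof -
  define \<delta> where "\<delta> = (\<lambda>a. if a = a0 then t else 0)"
  have h: "(\<Sum>c\<in>I. M a0 c * \<delta> c) = M a0 a0 * t"
    unfolding \<delta>_def using sdr[OF assms(1), of "M a0" a0 t] assms(2) by simp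
  have d: "bf I M \<delta> \<delta> = cnj t * (M a0 a0 * t)"
    using bf_delta1[OF assms, of M t \<delta>] h unfolding \<delta>_def by simp
  have d1: "bf I M \<delta> z = cnj t * (\<Sum>c\<in>I. M a0 c * z c)"
    using bf_delta1[OF assms, of M t z] unfolding \<delta>_def by simp
  have d2: "bf I M z \<delta> = (\<Sum>a\<in>I. cnj (z a) * M a a0) * t"
    using bf_delta2[OF assms, of M z t] unfolding \<delta>_def by simp
  have "qf I M (\<lambda>c. z c - \<delta> c) = bf I M z z - bf I M z \<delta> - (bf I M \<delta> z - bf I M \<delta> \<delta>)"
    by (simp only: qf_bf bf_diff1 bf_diff2)
  also have "\<dots> = qf I M z - (\<Sum>a\<in>I. cnj (z a) * M a a0) * t - cnj t * (\<Sum>c\<in>I. M a0 c * z c) + cnj t * (M a0 a0 * t)"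
    unfolding d d1 d2 qf_bf by simp
  finally show ?thesis unfolding \<delta>_def .
qed


lemma qf_schur:
  "qf I (\<lambda>a c. M a c - M a a0 * M a0 c / m) z =
   qf I M z - (\<Sum>a\<in>I. cnj (z a) * M a a0) * (\<Sum>c\<in>I. M a0 c * z c) / m"
proof -
  have "qf I (\<lambda>a c. M a c - M a a0 * M a0 c / m) z =
     qf I M z - (\<Sum>a\<in>I. \<Sum>c\<in>I. (cnj (z a) * M a a0) * (M a0 c * z c) / m)"
  proof -
    have e: "cnj (z a) * (M a c - M a a0 * M a0 c / m) * z c =
       cnj (z a) * M a c * z c - (cnj (z a) * M a a0) * (M a0 c * z c) / m" for a c
      by (simp add: algebra_simps)
    show ?thesis unfolding qf_def e by (simp only: sum_subtractf)
  qed
  also have "(\<Sum>a\<in>I. \<Sum>c\<in>I. (cnj (z a) * M a a0) * (M a0 c * z c) / m) =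
     (\<Sum>a\<in>I. cnj (z a) * M a a0) * (\<Sum>c\<in>I. M a0 c * z c) / m"
    by (simp add: sum_product sum_divide_distrib)
  finally show ?thesis .
qed

lemma herm_K:
  assumes "\<forall>a\<in>I. \<forall>c\<in>I. M c a = cnj (M a c)" "a0 \<in> I"
  shows "(\<Sum>a\<in>I. cnj (z a) * M a a0) = cnj (\<Sum>c\<in>I. M a0 c * z c)"
proof -
  have "cnj (\<Sum>c\<in>I. M a0 c * z c) = (\<Sum>c\<in>I. cnj (M a0 c) * cnj (z c))" by simp
  also have "\<dots> = (\<Sum>c\<in>I. cnj (z c) * M c a0)"
  proof (rule sum.cong)
    fix c assume "c \<in> I"
    hence "M c a0 = cnj (M a0 c)" using assms by blast
    thus "cnj (M a0 c) * cnj (z c) = cnj (z c) * M c a0" by (simp add: mult.commute)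
  qed simp
  finally show ?thesis by simp
qed



lemma decomp_aux:
  assumes "finite I" "finite S"
  shows "(\<forall>a\<in>I. \<forall>c\<in>I. M c a = cnj (M a c)) \<Longrightarrow> (\<forall>z. 0 \<le> Re (qf I M z)) \<Longrightarrow>
    (\<forall>a\<in>I. \<forall>c\<in>I. (a \<notin> S \<or> c \<notin> S) \<longrightarrow> M a c = 0) \<Longrightarrow>
    \<exists>(k::nat) v. \<forall>a\<in>I. \<forall>c\<in>I. M a c = (\<Sum>r<k. v r a * cnj (v r c))"
  using assms(2)
proof (induction S arbitrary: M rule: finite_induct)
  case empty
  show ?case
    apply (rule exI[of _ "0::nat"], rule exI[of _ "\<lambda>_ _. 0"])
    using empty.prems(3) by simp
next
  case (insert a0 S)
  note H = insert.prems(1) and P = insert.prems(2) and V = insert.prems(3)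
  show ?case
  proof (cases "a0 \<in> I")
    case False
    have "\<forall>a\<in>I. \<forall>c\<in>I. (a \<notin> S \<or> c \<notin> S) \<longrightarrow> M a c = 0"
      using V False by (metis insert_iff)
    then show ?thesis using insert.IH H P by blast
  next
    case a0I: True
    have Hc: "\<And>a c. a \<in> I \<Longrightarrow> c \<in> I \<Longrightarrow> cnj (M a c) = M c a"
    proof -
      fix a c assume "a \<in> I" "c \<in> I"
      hence "M a c = cnj (M c a)" using H by blast
      thus "cnj (M a c) = M c a" by simp
    qed
    define m where "m = M a0 a0"
    have "0 \<le> Re (qf I M (\<lambda>a. if a = a0 then 1 else 0))" using P by blast
    hence mre: "Re m \<ge> 0" using qf_one[OF assms(1) a0I, of M] unfolding m_def by simp
    have mim: "Im m = 0" using Hc[OF a0I a0I] unfolding m_def by (simp add: complex_eq_iff)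
    show ?thesis
    proof (cases "m = 0")
      case True
      have row: "M a0 c = 0" if cI: "c \<in> I" for c
      proof (cases "c = a0")
        case True then show ?thesis using \<open>m = 0\<close> m_def by simp
      next
        case cne: False
        define w where "w = M c a0"
        have Mac: "M a0 c = cnj w" using Hc[OF cI a0I] unfolding w_def by simp
        show ?thesis
        proof (rule ccontr)
          assume "M a0 c \<noteq> 0"
          hence wne: "w \<noteq> 0" using Mac by auto
          define t where "t = (\<bar>Re (M c c)\<bar> + 1) / (cmod w)^2"
          have wpos: "(cmod w)^2 > 0" using wne by simp
          have ww: "w * cnj w = complex_of_real ((cmod w)^2)"
            by (rule complex_norm_square[symmetric])
          define x where "x = - complex_of_real t * cnj w"
          have "qf I M (\<lambda>a. if a = a0 then x else if a = c then 1 else 0) =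
             cnj x * m * x + cnj x * M a0 c + M c a0 * x + M c c"
            using qf_two[OF assms(1) a0I cI cne[symmetric], of M x 1] unfolding m_def by simp
          also have "\<dots> = M c c - 2 * complex_of_real t * (w * cnj w)"
            using True unfolding x_def Mac w_def[symmetric] by (simp add: algebra_simps)
          finally have "Re (qf I M (\<lambda>a. if a = a0 then x else if a = c then 1 else 0)) =
             Re (M c c) - 2 * t * (cmod w)^2" unfolding ww by simp
          also have "\<dots> = Re (M c c) - 2 * (\<bar>Re (M c c)\<bar> + 1)"
            unfolding t_def using wpos by simp
          also have "\<dots> < 0" by (simp add: abs_if)
          finally have "Re (qf I M (\<lambda>a. if a = a0 then x else if a = c then 1 else 0)) < 0" .
          moreover have "0 \<le> Re (qf I M (\<lambda>a. if a = a0 then x else if a = c then 1 else 0))"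
            using P by blast
          ultimately show False by simp
        qed
      qed
      have "\<forall>a\<in>I. \<forall>c\<in>I. (a \<notin> S \<or> c \<notin> S) \<longrightarrow> M a c = 0"
      proof (intro ballI impI)
        fix a c assume aI: "a \<in> I" and cI: "c \<in> I" and "a \<notin> S \<or> c \<notin> S"
        show "M a c = 0"
        proof (cases "a = a0")
          case True thus ?thesis using row cI by simp
        next
          case False
          show ?thesis
          proof (cases "c = a0")
            case True
            have "M a c = cnj (M a0 a)" using Hc[OF a0I aI] True by simp
            thus ?thesis using row aI by simp
          next
            case False
            thus ?thesis using V aI cI \<open>a \<noteq> a0\<close> \<open>a \<notin> S \<or> c \<notin> S\<close> by auto
          qed
        qed
      qed
      then show ?thesis using insert.IH H P by blast
    next
      case mne: False
      have mpos: "Re m > 0" using mre mim mne by (simp add: complex_eq_iff)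
      have mreal: "m = complex_of_real (Re m)" using mim by (simp add: complex_eq_iff)
      have cm: "cnj m = m" using mim by (simp add: complex_eq_iff)
      define r where "r = sqrt (Re m)"
      have r2: "complex_of_real r * complex_of_real r = m"
      proof -
        have "r * r = Re m" unfolding r_def using mpos by simp
        hence "complex_of_real r * complex_of_real r = complex_of_real (Re m)"
          by (metis of_real_mult)
        thus ?thesis using mreal by simp
      qed
      define v0 where "v0 a = M a a0 / complex_of_real r" for a
      define M' where "M' a c = M a c - M a a0 * M a0 c / m" for a c
      have H': "\<forall>a\<in>I. \<forall>c\<in>I. M' c a = cnj (M' a c)"
      proof (intro ballI)
        fix a c assume aI: "a \<in> I" and cI: "c \<in> I"
        show "M' c a = cnj (M' a c)"
          unfolding M'_def using Hc[OF aI cI] Hc[OF aI a0I] Hc[OF a0I cI] cm by (simp add: mult.commute)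
      qed
      have P': "\<forall>z. 0 \<le> Re (qf I M' z)"
      proof
        fix z
        define L where "L = (\<Sum>c\<in>I. M a0 c * z c)"
        define t where "t = L / m"
        have K: "(\<Sum>a\<in>I. cnj (z a) * M a a0) = cnj L"
          unfolding L_def using herm_K[OF H a0I] .
        have "qf I M' z = qf I M z - cnj L * L / m"
          unfolding M'_def using qf_schur[of I M a0 m z] K L_def by simp
        also have "\<dots> = qf I M (\<lambda>c. z c - (if c = a0 then t else 0))"
          unfolding qf_shift[OF assms(1) a0I] K m_def[symmetric] L_def[symmetric] t_def
          using mne cm by (simp add: field_simps)
        finally show "0 \<le> Re (qf I M' z)" using P by simp
      qed
      have V': "\<forall>a\<in>I. \<forall>c\<in>I. (a \<notin> S \<or> c \<notin> S) \<longrightarrow> M' a c = 0"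
      proof (intro ballI impI)
        fix a c assume aI: "a \<in> I" and cI: "c \<in> I" and acS: "a \<notin> S \<or> c \<notin> S"
        show "M' a c = 0"
        proof (cases "a = a0")
          case True thus ?thesis unfolding M'_def using mne by (simp add: m_def)
        next
          case ane: False
          show ?thesis
          proof (cases "c = a0")
            case True thus ?thesis unfolding M'_def using mne by (simp add: m_def)
          next
            case cne: False
            show ?thesis
            proof (cases "a \<notin> S")
              case True
              hence "M a c = 0" "M a a0 = 0" using V aI cI a0I ane by auto
              thus ?thesis unfolding M'_def by simp
            next
              case False
              hence "c \<notin> S" using acS by simp
              hence "M a c = 0" "M a0 c = 0" using V aI cI a0I cne by auto
              thus ?thesis unfolding M'_def by simp
            qed
          qed
        qed
      qed
      obtain k :: nat and v where kv: "\<forall>a\<in>I. \<forall>c\<in>I. M' a c = (\<Sum>r<k. v r a * cnj (v r c))"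
        using insert.IH[OF H' P' V'] by blast
      define v' where "v' = v(k := v0)"
      have "\<forall>a\<in>I. \<forall>c\<in>I. M a c = (\<Sum>r<Suc k. v' r a * cnj (v' r c))"
      proof (intro ballI)
        fix a c assume aI: "a \<in> I" and cI: "c \<in> I"
        have "v0 a * cnj (v0 c) = M a a0 * M a0 c / m"
          unfolding v0_def using Hc[OF cI a0I] r2[symmetric] by (simp add: field_simps)
        moreover have "(\<Sum>r<k. v' r a * cnj (v' r c)) = M' a c"
          using kv aI cI unfolding v'_def by simp
        ultimately show "M a c = (\<Sum>r<Suc k. v' r a * cnj (v' r c))"
          unfolding M'_def v'_def by simp
      qed
      then show ?thesis by blast
    qed
  qed
qed

lemma decomp:
  assumes "finite I" "\<forall>a\<in>I. \<forall>c\<in>I. M c a = cnj (M a c)" "\<forall>z. 0 \<le> Re (qf I M z)"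
  shows "\<exists>(k::nat) v. \<forall>a\<in>I. \<forall>c\<in>I. M a c = (\<Sum>r<k. v r a * cnj (v r c))"
  using decomp_aux[OF assms(1) assms(1) assms(2,3)] by blast



lemma sum4_swap:
  fixes X Y :: "nat \<Rightarrow> nat \<Rightarrow> nat \<Rightarrow> complex"
  shows "(\<Sum>i<n. \<Sum>j<n. (\<Sum>r<k. X r i j) * (\<Sum>s<k. Y s i j)) =
         (\<Sum>r<k. \<Sum>s<k. \<Sum>i<n. \<Sum>j<n. X r i j * Y s i j)"
  by (simp only: sum_product sum.swap[where A="{..<n}" and B="{..<k}"])

lemma cnj_sq_nonneg: "0 \<le> x * cnj (x::complex)"
  by (simp add: complex_mult_cnj less_eq_complex_def)

lemma final_ineq:
  fixes v :: "nat \<Rightarrow> bool \<times> nat \<Rightarrow> complex"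
  shows "0 \<le> (\<Sum>i<n. \<Sum>j<n.
      (\<Sum>r<k. v r (False,j) * cnj (v r (False,i))) * (\<Sum>s<k. v s (True,j) * cnj (v s (True,i)))
    - (\<Sum>r<k. v r (False,j) * cnj (v r (True,i))) * (\<Sum>s<k. v s (True,j) * cnj (v s (False,i))))"
proof -
  define p where "p r s = (\<Sum>j<n. v r (False,j) * v s (True,j))" for r s
  have e1: "(\<Sum>i<n. \<Sum>j<n. (v r (False,j) * cnj (v r (False,i))) * (v s (True,j) * cnj (v s (True,i))))
      = p r s * cnj (p r s)" for r s
  proof -
    have "p r s * cnj (p r s) = (\<Sum>j<n. \<Sum>i<n. (v r (False,j) * v s (True,j)) * (cnj (v r (False,i)) * cnj (v s (True,i))))"
      unfolding p_def by (simp add: sum_product)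
    also have "\<dots> = (\<Sum>i<n. \<Sum>j<n. (v r (False,j) * v s (True,j)) * (cnj (v r (False,i)) * cnj (v s (True,i))))"
      by (rule sum.swap)
    finally show ?thesis by (simp add: mult_ac)
  qed
  have e2: "(\<Sum>i<n. \<Sum>j<n. (v r (False,j) * cnj (v r (True,i))) * (v s (True,j) * cnj (v s (False,i))))
      = p r s * cnj (p s r)" for r s
  proof -
    have "p r s * cnj (p s r) = (\<Sum>j<n. \<Sum>i<n. (v r (False,j) * v s (True,j)) * (cnj (v s (False,i)) * cnj (v r (True,i))))"
      unfolding p_def by (simp add: sum_product)
    also have "\<dots> = (\<Sum>i<n. \<Sum>j<n. (v r (False,j) * v s (True,j)) * (cnj (v s (False,i)) * cnj (v r (True,i))))"
      by (rule sum.swap)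
    finally show ?thesis by (simp add: mult_ac)
  qed
  have "(\<Sum>i<n. \<Sum>j<n.
      (\<Sum>r<k. v r (False,j) * cnj (v r (False,i))) * (\<Sum>s<k. v s (True,j) * cnj (v s (True,i)))
    - (\<Sum>r<k. v r (False,j) * cnj (v r (True,i))) * (\<Sum>s<k. v s (True,j) * cnj (v s (False,i)))) =
    (\<Sum>i<n. \<Sum>j<n. (\<Sum>r<k. v r (False,j) * cnj (v r (False,i))) * (\<Sum>s<k. v s (True,j) * cnj (v s (True,i))))
    - (\<Sum>i<n. \<Sum>j<n. (\<Sum>r<k. v r (False,j) * cnj (v r (True,i))) * (\<Sum>s<k. v s (True,j) * cnj (v s (False,i))))"
    by (simp add: sum_subtractf)
  also have "\<dots> = (\<Sum>r<k. \<Sum>s<k. p r s * cnj (p r s)) - (\<Sum>r<k. \<Sum>s<k. p r s * cnj (p s r))"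
    unfolding sum4_swap e1 e2 ..
  also have "\<dots> = (1/2) * (\<Sum>r<k. \<Sum>s<k. (p r s - p s r) * cnj (p r s - p s r))"
  proof -
    have a: "(\<Sum>r<k. \<Sum>s<k. p s r * cnj (p s r)) = (\<Sum>r<k. \<Sum>s<k. p r s * cnj (p r s))"
      by (rule sum.swap)
    have b: "(\<Sum>r<k. \<Sum>s<k. p s r * cnj (p r s)) = (\<Sum>r<k. \<Sum>s<k. p r s * cnj (p s r))"
      by (rule sum.swap)
    have "(\<Sum>r<k. \<Sum>s<k. (p r s - p s r) * cnj (p r s - p s r)) =
       (\<Sum>r<k. \<Sum>s<k. p r s * cnj (p r s)) - (\<Sum>r<k. \<Sum>s<k. p r s * cnj (p s r))
       - (\<Sum>r<k. \<Sum>s<k. p s r * cnj (p r s)) + (\<Sum>r<k. \<Sum>s<k. p s r * cnj (p s r))"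
      by (simp add: algebra_simps sum_subtractf sum.distrib)
    also have "\<dots> = 2 * ((\<Sum>r<k. \<Sum>s<k. p r s * cnj (p r s)) - (\<Sum>r<k. \<Sum>s<k. p r s * cnj (p s r)))"
      unfolding a b by simp
    finally show ?thesis by simp
  qed
  also have "0 \<le> \<dots>"
    by (intro mult_nonneg_nonneg sum_nonneg cnj_sq_nonneg) (simp add: less_eq_complex_def)
  finally show ?thesis by simp
qed

lemma sum_pairs:
  fixes f :: "bool \<times> nat \<Rightarrow> complex"
  shows "(\<Sum>a\<in>UNIV \<times> {..<n}. f a) = (\<Sum>i<n. f (True,i)) + (\<Sum>i<n. f (False,i))"
proof -
  have "(\<Sum>b\<in>UNIV. \<Sum>i<n. f (b,i)) = (\<Sum>(b,i)\<in>UNIV \<times> {..<n}. f (b,i))"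
    by (rule sum.cartesian_product)
  also have "(\<lambda>(b,i). f (b,i)) = f" by simp
  finally show ?thesis by (simp add: UNIV_bool add.commute)
qed



lemma cconj_cconj: "cconj (cconj A) = A" by (simp add: cconj_def)

theorem corollary4p4:
  fixes J :: "'v::euclidean_space \<Rightarrow> 'v"
    and g :: "'v \<Rightarrow> 'v \<Rightarrow> real"
    and u :: "'v \<Rightarrow> 'v \<Rightarrow> 'v \<Rightarrow> 'v \<Rightarrow> real"
    and \<xi> \<eta> :: "'v cvec"
    and n :: nat and e :: "nat \<Rightarrow> 'v cvec"
  assumes "complex_structure J"
    and "hermitian_metric J g"
    and "curvature_type J u"
    and "nonneg_tensor J u"
    and "\<xi> \<in> T10 J" and "\<eta> \<in> T10 J"
    and "cext4 u \<xi> (cconj \<xi>) \<eta> (cconj \<eta>) = 0"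
    and "orthonormal_basis_T10 J g n e"
  shows "(\<Sum>i<n. \<Sum>j<n.
            cext4 u \<xi> (cconj \<xi>) (e i) (cconj (e j)) * cext4 u (e j) (cconj (e i)) \<eta> (cconj \<eta>)
          - cext4 u \<xi> (cconj (e i)) \<eta> (cconj (e j)) * cext4 u (e j) (cconj \<xi>) (e i) (cconj \<eta>)) \<ge> 0"
proof -
  note cs = assms(1) and ct = assms(3) and nn = assms(4) and xi = assms(5) and eta = assms(6)
    and z0 = assms(7) and ob = assms(8)
  have eT: "e i \<in> T10 J" if "i < n" for i
    using ob that unfolding orthonormal_basis_T10_def by blast
  define I where "I = (UNIV::bool set) \<times> {..<n}"
  define M where "M = (\<lambda>(b1::bool, i::nat) (b2::bool, k::nat).
     if b1 then (if b2 then cext4 u (e i) (cconj (e k)) \<eta> (cconj \<eta>)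
                 else cext4 u (e i) (cconj \<xi>) (e k) (cconj \<eta>))
     else (if b2 then cext4 u \<xi> (cconj (e k)) \<eta> (cconj (e i))
           else cext4 u \<xi> (cconj \<xi>) (e k) (cconj (e i))))"
  have herm: "\<forall>a\<in>I. \<forall>c\<in>I. M c a = cnj (M a c)"
  proof (intro ballI)
    fix a c :: "bool \<times> nat"
    obtain b1 i where a: "a = (b1, i)" by force
    obtain b2 k where c: "c = (b2, k)" by force
    show "M c a = cnj (M a c)"
      unfolding a c M_def
      by (cases b1; cases b2; simp add: c_cnj[OF ct] cconj_cconj; rule c_pairswap[OF ct])
  qed
  have psd: "\<forall>z. 0 \<le> Re (qf I M z)"
  proof
    fix z :: "bool \<times> nat \<Rightarrow> complex"
    define A where "A = (\<Sum>i<n. cscale (cnj (z (True,i))) (e i))"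
    define B where "B = (\<Sum>i<n. cscale (z (False,i)) (e i))"
    have AT: "A \<in> T10 J" unfolding A_def
      by (intro T10_sum[OF cs] T10_scale[OF cs] eT) simp
    have BT: "B \<in> T10 J" unfolding B_def
      by (intro T10_sum[OF cs] T10_scale[OF cs] eT) simp
    have q: "qf I M z =
       (\<Sum>i<n. \<Sum>k<n. cnj (z (True,i)) * M (True,i) (True,k) * z (True,k))
     + (\<Sum>i<n. \<Sum>k<n. cnj (z (True,i)) * M (True,i) (False,k) * z (False,k))
     + (\<Sum>i<n. \<Sum>k<n. cnj (z (False,i)) * M (False,i) (True,k) * z (True,k))
     + (\<Sum>i<n. \<Sum>k<n. cnj (z (False,i)) * M (False,i) (False,k) * z (False,k))"
      unfolding qf_def I_def sum_pairs by (simp add: sum.distrib)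
    have h1: "cext4 u A (cconj A) \<eta> (cconj \<eta>) =
       (\<Sum>i<n. \<Sum>k<n. cnj (z (True,i)) * M (True,i) (True,k) * z (True,k))"
      unfolding A_def M_def
      by (simp add: c_sum[OF ct] c_scale[OF ct] cconj_sum cconj_scale sum_distrib_left mult_ac;
          subst sum.swap; simp add: mult_ac)
    have h3: "cext4 u A (cconj \<xi>) B (cconj \<eta>) =
       (\<Sum>i<n. \<Sum>k<n. cnj (z (True,i)) * M (True,i) (False,k) * z (False,k))"
      unfolding A_def B_def M_def
      by (simp add: c_sum[OF ct] c_scale[OF ct] cconj_sum cconj_scale sum_distrib_left mult_ac;
          subst sum.swap; simp add: mult_ac)
    have h2: "cext4 u \<xi> (cconj \<xi>) B (cconj B) =
       (\<Sum>i<n. \<Sum>k<n. cnj (z (False,i)) * M (False,i) (False,k) * z (False,k))"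
      unfolding B_def M_def
      by (simp add: c_sum[OF ct] c_scale[OF ct] cconj_sum cconj_scale sum_distrib_left mult_ac;
          subst sum.swap; simp add: mult_ac)
    have h4: "cext4 u \<xi> (cconj A) \<eta> (cconj B) =
       (\<Sum>i<n. \<Sum>k<n. cnj (z (False,i)) * M (False,i) (True,k) * z (True,k))"
      unfolding A_def B_def M_def
      by (simp add: c_sum[OF ct] c_scale[OF ct] cconj_sum cconj_scale sum_distrib_left mult_ac;
          subst sum.swap; simp add: mult_ac)
    have "qf I M z = cext4 u A (cconj A) \<eta> (cconj \<eta>) + cext4 u \<xi> (cconj \<xi>) B (cconj B)
     + cext4 u A (cconj \<xi>) B (cconj \<eta>) + cext4 u \<xi> (cconj A) \<eta> (cconj B)"
      unfolding q h1 h2 h3 h4 by (simp add: add_ac)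
    thus "0 \<le> Re (qf I M z)" using G_nonneg[OF ct cs nn xi eta z0 AT BT] by simp
  qed
  obtain k :: nat and v where kv: "\<forall>a\<in>I. \<forall>c\<in>I. M a c = (\<Sum>r<k. v r a * cnj (v r c))"
    using decomp[OF _ herm psd] unfolding I_def by auto
  have "(\<Sum>i<n. \<Sum>j<n.
            cext4 u \<xi> (cconj \<xi>) (e i) (cconj (e j)) * cext4 u (e j) (cconj (e i)) \<eta> (cconj \<eta>)
          - cext4 u \<xi> (cconj (e i)) \<eta> (cconj (e j)) * cext4 u (e j) (cconj \<xi>) (e i) (cconj \<eta>)) =
    (\<Sum>i<n. \<Sum>j<n.
      (\<Sum>r<k. v r (False,j) * cnj (v r (False,i))) * (\<Sum>s<k. v s (True,j) * cnj (v s (True,i)))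
    - (\<Sum>r<k. v r (False,j) * cnj (v r (True,i))) * (\<Sum>s<k. v s (True,j) * cnj (v s (False,i))))"
  proof (intro sum.cong refl)
    fix i j assume i: "i \<in> {..<n}" and j: "j \<in> {..<n}"
    have m: "(b1, j) \<in> I" "(b2, i) \<in> I" for b1 b2 using i j unfolding I_def by auto
    have "cext4 u \<xi> (cconj \<xi>) (e i) (cconj (e j)) = M (False,j) (False,i)"
         "cext4 u (e j) (cconj (e i)) \<eta> (cconj \<eta>) = M (True,j) (True,i)"
         "cext4 u \<xi> (cconj (e i)) \<eta> (cconj (e j)) = M (False,j) (True,i)"
         "cext4 u (e j) (cconj \<xi>) (e i) (cconj \<eta>) = M (True,j) (False,i)"
      unfolding M_def by simp_all
    thus "cext4 u \<xi> (cconj \<xi>) (e i) (cconj (e j)) * cext4 u (e j) (cconj (e i)) \<eta> (cconj \<eta>)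
          - cext4 u \<xi> (cconj (e i)) \<eta> (cconj (e j)) * cext4 u (e j) (cconj \<xi>) (e i) (cconj \<eta>) =
      (\<Sum>r<k. v r (False,j) * cnj (v r (False,i))) * (\<Sum>s<k. v s (True,j) * cnj (v s (True,i)))
    - (\<Sum>r<k. v r (False,j) * cnj (v r (True,i))) * (\<Sum>s<k. v s (True,j) * cnj (v s (False,i)))"
      using kv m by simp
  qed
  thus ?thesis using final_ineq[where n=n and k=k and v=v] by simp
qed


end
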